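(* Let $\Lambda$ be a subshift over a finite alphabet $\Sigma$. Then its canonical pair $(\mathfrak L^-_\Lambda,\mathfrak L^+_\Lambda)$ is a $\lambda$-graph bisystem over the common alphabet $\Sigma$ which satisfies FPCC, and the subshift it presents (the unique subshift whose set of nonempty admissible words is $W_{\mathfrak L_\Lambda^+}=W_{\mathfrak L_\Lambda^-}$) is $\Lambda$ itself.
   Context: Subshift: nonempty closed $\Lambda\subset\Sigma^{\mathbb Z}$ with $\sigma(\Lambda)=\Lambda$, $\sigma((x_n))=(x_{n+1})$. Canonical pair: for integers $k<l$ and $x\in\Lambda$, $W_{k,l}(x)$ is the set of words $(\mu_{k+1},\dots,\mu_{l-1})\in\Sigma^{l-k-1}$ such that the sequence equal to $x_n$ for $n\le k$ and $n\ge l$ and to $\mu_n$ for $k<n<l$ lies in $\Lambda$. Write $[x]_{k,l}$ for the class of $x$ under $x\sim z\iff W_{k,l}(x)=W_{k,l}(z)$ and $\Omega^c_{k,l}$ for the (finite) set of classes; $\Omega^c_{-1,0}$ and $\Omega^c_{0,1}$ are singletons. Put $V_l:=\Omega^c_{-1,l}$ ($l\ge0$), and let $\theta_l:\Omega^c_{-l,1}\to\Omega^c_{-1,l}$ be the bijection $[x]_{-l,1}\mapsto[\sigma^{1-l}(x)]_{-1,l}$. $E^+_{l,l+1}$: for $u\in V_l$, $v\in V_{l+1}$, $\alpha\in\Sigma$ there is exactly one edge from $u$ to $v$ labeled $\alpha$ iff some $y\in\Lambda$ has $y_l=\alpha$, $[y]_{-1,l}=u$, $[y]_{-1,l+1}=v$,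 and no edge otherwise. $E^-_{l+1,l}$: for $v\in V_{l+1}$, $u\in V_l$, $\beta\in\Sigma$ there is exactly one edge from $v$ to $u$ labeled $\beta$ iff some $y\in\Lambda$ has $y_{-l}=\beta$, $\theta_{l+1}([y]_{-(l+1),1})=v$, $\theta_l([y]_{-l,1})=u$. $\mathfrak L^\pm_\Lambda=(V,E^\pm,\lambda^\pm)$ with the labels just described. $\lambda$-graph bisystem over $\Sigma^\pm$: vertex set $V=\bigsqcup_{l\ge0}V_l$, $V_l$ finite nonempty; edge sets $E^-=\bigsqcup E^-_{l+1,l}$ (edges from $V_{l+1}$ to $V_l$) and $E^+=\bigsqcup E^+_{l,l+1}$ (edges from $V_l$ to $V_{l+1}$), labelings $\lambda^\pm:E^\pm\to\Sigma^\pm$, with: (1) every $v\in V_l$, $l\ge1$, is terminal of an edge of $E^-_{l+1,l}$, source of an edge of $E^-_{l,l-1}$, source of an edge of $E^+_{l,l+1}$, terminal of an edge of $E^+_{l-1,l}$; each $v\in V_0$ is terminal of an edge of $E^-_{1,0}$ and source of one of $E^+_{0,1}$; (2) $\lambda^-$ right-resolving (same source and label implies same edge), $\lambda^+$ left-resolving (same terminal and label implies same edge); (3) local property: for $u\in V_l,v\in V_{l+2}$ a label-preserving bijection between $\{(e^-,e^+)\in E^-_{l+1,l}\times E^+_{l+1,l+2}:t(e^-)=u,s(e^-)=s(e^+),t(e^+)=v\}$ and $\{(f^+,f^-)\in E^+_{l,l+1}\times E^-_{l+2,l+1}:s(f^+)=u,t(f^+)=t(f^-),s(f^-)=v\}$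 (matching $\lambda^-$ of the $E^-$ components and $\lambda^+$ of the $E^+$ components). For $u\in V_l$: $F(u)$ = words $(\lambda^-(f_l),\dots,\lambda^-(f_1))$ along paths $f_k\in E^-_{k,k-1}$ from $u$ down to $V_0$; $P(u)$ = words $(\lambda^+(e_1),\dots,\lambda^+(e_l))$ along paths $e_k\in E^+_{k-1,k}$ from $V_0$ to $u$. FPCC: $|V_0|=1$, $\Sigma^-=\Sigma^+$, $F(u)=P(u)$ for all $u\in V_l,l\ge1$. $W_{\mathfrak L^+}$ (resp. $W_{\mathfrak L^-}$) is the set of label words of finite paths in $\mathfrak L^+$ (resp. in $\mathfrak L^-$, read in the direction of the edges). *)

theory Defs
  imports Main
begin

definition shift :: "(int \<Rightarrow> 'a) \<Rightarrow> (int \<Rightarrow> 'a)" where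
  "shift x = (\<lambda>n. x (n + 1))"

definition shift_pow :: "int \<Rightarrow> (int \<Rightarrow> 'a) \<Rightarrow> (int \<Rightarrow> 'a)" where
  "shift_pow k x = (\<lambda>n. x (n + k))"

text \<open>Closedness in the product topology of discrete spaces, written out:
  x belongs to the closure iff every central window of x occurs in some element.\<close>
definition shift_closed :: "(int \<Rightarrow> 'a) set \<Rightarrow> bool" where
  "shift_closed L \<longleftrightarrow>
     (\<forall>x. (\<forall>N::nat. \<exists>y\<in>L. \<forall>i. \<bar>i\<bar> \<le> int N \<longrightarrow> y i = x i) \<longrightarrow> x \<in> L)"

definition subshift :: "(int \<Rightarrow> 'a) set \<Rightarrow> bool" where
  "subshift L \<longleftrightarrow> L \<noteq> {} \<and> shift_closed L \<and> shift ` L = L"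

definition admissible_words :: "(int \<Rightarrow> 'a) set \<Rightarrow> 'a list set" where
  "admissible_words L =
     {w. w \<noteq> [] \<and> (\<exists>x\<in>L. \<exists>n. \<forall>i<length w. x (n + int i) = w ! i)}"

definition splice :: "int \<Rightarrow> int \<Rightarrow> (int \<Rightarrow> 'a) \<Rightarrow> 'a list \<Rightarrow> (int \<Rightarrow> 'a)" where
  "splice k l x mu = (\<lambda>n. if k < n \<and> n < l then mu ! nat (n - k - 1) else x n)"

definition Wkl :: "(int \<Rightarrow> 'a) set \<Rightarrow> int \<Rightarrow> int \<Rightarrow> (int \<Rightarrow> 'a) \<Rightarrow> 'a list set" where
  "Wkl L k l x = {mu. length mu = nat (l - k - 1) \<and> splice k l x mu \<in> L}"

definition cls :: "(int \<Rightarrow> 'a) set \<Rightarrow> int \<Rightarrow> int \<Rightarrow> (int \<Rightarrow> 'a) \<Rightarrow> (int \<Rightarrow> 'a) set" where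
  "cls L k l x = {z \<in> L. Wkl L k l z = Wkl L k l x}"

definition Omega :: "(int \<Rightarrow> 'a) set \<Rightarrow> int \<Rightarrow> int \<Rightarrow> (int \<Rightarrow> 'a) set set" where
  "Omega L k l = cls L k l ` L"

text \<open>V_l = Omega^c_{-1,l}.  (Levels are kept apart by the index l, which
  realizes the disjoint union of the V_l.)\<close>
definition canV :: "(int \<Rightarrow> 'a) set \<Rightarrow> nat \<Rightarrow> (int \<Rightarrow> 'a) set set" where
  "canV L l = Omega L (-1) (int l)"

text \<open>theta_l : Omega^c_{-l,1} -> Omega^c_{-1,l}, [x]_{-l,1} |-> [sigma^(1-l) x]_{-1,l},
  evaluated at a representative of the class.\<close>
definition theta :: "(int \<Rightarrow> 'a) set \<Rightarrow> nat \<Rightarrow> (int \<Rightarrow> 'a) set \<Rightarrow> (int \<Rightarrow> 'a) set" where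
  "theta L l C = cls L (-1) (int l) (shift_pow (1 - int l) (SOME x. x \<in> C))"

text \<open>Edges are triples (source, label, terminal); at most one edge per
  (source, label, terminal) as in the definition.  canEp L l = E^+_{l,l+1},
  canEm L l = E^-_{l+1,l}.\<close>
definition canEp :: "(int \<Rightarrow> 'a) set \<Rightarrow> nat \<Rightarrow>
    ((int \<Rightarrow> 'a) set \<times> 'a \<times> (int \<Rightarrow> 'a) set) set" where
  "canEp L l = {(u, \<alpha>, v). u \<in> canV L l \<and> v \<in> canV L (Suc l) \<and>
      (\<exists>y\<in>L. y (int l) = \<alpha> \<and> cls L (-1) (int l) y = u \<and> cls L (-1) (int (Suc l)) y = v)}"

definition canEm :: "(int \<Rightarrow> 'a) set \<Rightarrow> nat \<Rightarrow>
    ((int \<Rightarrow> 'a) set \<times> 'a \<times> (int \<Rightarrow> 'a) set) set" where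
  "canEm L l = {(v, \<beta>, u). v \<in> canV L (Suc l) \<and> u \<in> canV L l \<and>
      (\<exists>y\<in>L. y (- int l) = \<beta> \<and>
         theta L (Suc l) (cls L (- int (Suc l)) 1 y) = v \<and>
         theta L l (cls L (- int l) 1 y) = u)}"

definition esrc :: "'v \<times> 'a \<times> 'v \<Rightarrow> 'v" where "esrc e = fst e"
definition elab :: "'v \<times> 'a \<times> 'v \<Rightarrow> 'a" where "elab e = fst (snd e)"
definition etgt :: "'v \<times> 'a \<times> 'v \<Rightarrow> 'v" where "etgt e = snd (snd e)"

text \<open>Data: alphabets Sm, Sp; vertex levels V l; Em l = E^-_{l+1,l} with source sm,
  terminal tm, label lm; Ep l = E^+_{l,l+1} with source sp, terminal tp, label lp.\<close>

definition lambda_graph_bisystem ::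
  "'am set \<Rightarrow> 'ap set \<Rightarrow> (nat \<Rightarrow> 'v set) \<Rightarrow>
   (nat \<Rightarrow> 'e set) \<Rightarrow> ('e \<Rightarrow> 'v) \<Rightarrow> ('e \<Rightarrow> 'v) \<Rightarrow> ('e \<Rightarrow> 'am) \<Rightarrow>
   (nat \<Rightarrow> 'f set) \<Rightarrow> ('f \<Rightarrow> 'v) \<Rightarrow> ('f \<Rightarrow> 'v) \<Rightarrow> ('f \<Rightarrow> 'ap) \<Rightarrow> bool" where
  "lambda_graph_bisystem Sm Sp V Em sm tm lm Ep sp tp lp \<longleftrightarrow>
     finite Sm \<and> finite Sp \<and>
     (\<forall>l. finite (V l) \<and> V l \<noteq> {}) \<and>
     (\<forall>l. \<forall>e\<in>Em l. sm e \<in> V (Suc l) \<and> tm e \<in> V l \<and> lm e \<in> Sm) \<and>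
     (\<forall>l. \<forall>e\<in>Ep l. sp e \<in> V l \<and> tp e \<in> V (Suc l) \<and> lp e \<in> Sp) \<and>
     (\<forall>l\<ge>1. \<forall>v\<in>V l. (\<exists>e\<in>Em l. tm e = v) \<and> (\<exists>e\<in>Em (l - 1). sm e = v) \<and>
                       (\<exists>e\<in>Ep l. sp e = v) \<and> (\<exists>e\<in>Ep (l - 1). tp e = v)) \<and>
     (\<forall>v\<in>V 0. (\<exists>e\<in>Em 0. tm e = v) \<and> (\<exists>e\<in>Ep 0. sp e = v)) \<and>
     (\<forall>l. \<forall>e\<in>Em l. \<forall>e'\<in>Em l. sm e = sm e' \<and> lm e = lm e' \<longrightarrow> e = e') \<and>
     (\<forall>l. \<forall>e\<in>Ep l. \<forall>e'\<in>Ep l. tp e = tp e' \<and> lp e = lp e' \<longrightarrow> e = e') \<and>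
     (\<forall>l. \<forall>u\<in>V l. \<forall>v\<in>V (l + 2).
        \<exists>\<phi>. bij_betw \<phi>
              {(em, ep). em \<in> Em l \<and> ep \<in> Ep (Suc l) \<and> tm em = u \<and> sm em = sp ep \<and> tp ep = v}
              {(fp, fm). fp \<in> Ep l \<and> fm \<in> Em (Suc l) \<and> sp fp = u \<and> tp fp = tm fm \<and> sm fm = v}
            \<and> (\<forall>p \<in> {(em, ep). em \<in> Em l \<and> ep \<in> Ep (Suc l) \<and> tm em = u \<and> sm em = sp ep \<and> tp ep = v}.
                 lm (fst p) = lm (snd (\<phi> p)) \<and> lp (snd p) = lp (fst (\<phi> p))))"

text \<open>F(u) for u in V l: words (lm f_l, ..., lm f_1), f_k in E^-_{k,k-1} = Em (k-1),
  from u down to V_0.\<close>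
definition Fwords :: "(nat \<Rightarrow> 'e set) \<Rightarrow> ('e \<Rightarrow> 'v) \<Rightarrow> ('e \<Rightarrow> 'v) \<Rightarrow> ('e \<Rightarrow> 'am) \<Rightarrow>
    nat \<Rightarrow> 'v \<Rightarrow> 'am list set" where
  "Fwords Em sm tm lm l u =
     {map (\<lambda>k. lm (f k)) (rev [1..<Suc l]) | f.
        (\<forall>k\<in>{1..l}. f k \<in> Em (k - 1)) \<and> sm (f l) = u \<and>
        (\<forall>k\<in>{2..l}. tm (f k) = sm (f (k - 1)))}"

text \<open>P(u) for u in V l: words (lp e_1, ..., lp e_l), e_k in E^+_{k-1,k} = Ep (k-1),
  from V_0 up to u.\<close>
definition Pwords :: "(nat \<Rightarrow> 'f set) \<Rightarrow> ('f \<Rightarrow> 'v) \<Rightarrow> ('f \<Rightarrow> 'v) \<Rightarrow> ('f \<Rightarrow> 'ap) \<Rightarrow>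
    nat \<Rightarrow> 'v \<Rightarrow> 'ap list set" where
  "Pwords Ep sp tp lp l u =
     {map (\<lambda>k. lp (e k)) [1..<Suc l] | e.
        (\<forall>k\<in>{1..l}. e k \<in> Ep (k - 1)) \<and> tp (e l) = u \<and>
        (\<forall>k\<in>{1..<l}. tp (e k) = sp (e (Suc k)))}"

definition FPCC ::
  "'a set \<Rightarrow> 'a set \<Rightarrow> (nat \<Rightarrow> 'v set) \<Rightarrow>
   (nat \<Rightarrow> 'e set) \<Rightarrow> ('e \<Rightarrow> 'v) \<Rightarrow> ('e \<Rightarrow> 'v) \<Rightarrow> ('e \<Rightarrow> 'a) \<Rightarrow>
   (nat \<Rightarrow> 'f set) \<Rightarrow> ('f \<Rightarrow> 'v) \<Rightarrow> ('f \<Rightarrow> 'v) \<Rightarrow> ('f \<Rightarrow> 'a) \<Rightarrow> bool" where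
  "FPCC Sm Sp V Em sm tm lm Ep sp tp lp \<longleftrightarrow>
     card (V 0) = 1 \<and> Sm = Sp \<and>
     (\<forall>l\<ge>1. \<forall>u\<in>V l. Fwords Em sm tm lm l u = Pwords Ep sp tp lp l u)"

definition Wplus :: "(nat \<Rightarrow> 'f set) \<Rightarrow> ('f \<Rightarrow> 'v) \<Rightarrow> ('f \<Rightarrow> 'v) \<Rightarrow> ('f \<Rightarrow> 'ap) \<Rightarrow> 'ap list set" where
  "Wplus Ep sp tp lp =
     {map (\<lambda>i. lp (e i)) [0..<n] | e n m. n \<ge> 1 \<and>
        (\<forall>i<n. e i \<in> Ep (m + i)) \<and> (\<forall>i. Suc i < n \<longrightarrow> tp (e i) = sp (e (Suc i)))}"

text \<open>Label words of (nonempty) finite paths in L^-, read along the edges (downwards):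
  f_0..f_{n-1}, f_i in Em (m+n-1-i).\<close>
definition Wminus :: "(nat \<Rightarrow> 'e set) \<Rightarrow> ('e \<Rightarrow> 'v) \<Rightarrow> ('e \<Rightarrow> 'v) \<Rightarrow> ('e \<Rightarrow> 'am) \<Rightarrow> 'am list set" where
  "Wminus Em sm tm lm =
     {map (\<lambda>i. lm (f i)) [0..<n] | f n m. n \<ge> 1 \<and>
        (\<forall>i<n. f i \<in> Em (m + n - 1 - i)) \<and> (\<forall>i. Suc i < n \<longrightarrow> tm (f i) = sm (f (Suc i)))}"

definition presented_subshift :: "'a list set \<Rightarrow> (int \<Rightarrow> 'a) set" where
  "presented_subshift W = (THE L. subshift L \<and> admissible_words L = W)"

end

theory Submission imports Defs begin

lemma shift_pow_0[simp]: "shift_pow 0 x = x" by (simp add: shift_pow_def)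
lemma shift_pow_add[simp]: "shift_pow a (shift_pow b x) = shift_pow (a+b) x"
  by (simp add: shift_pow_def fun_eq_iff ac_simps)
lemma shift_pow_app: "shift_pow k x n = x (n + k)" by (simp add: shift_pow_def)
lemma shift_eq: "shift x = shift_pow 1 x" by (simp add: shift_def shift_pow_def)

lemma splice_outside:
  "(\<And>n. n \<le> k \<or> l \<le> n \<Longrightarrow> x n = x' n) \<Longrightarrow> splice k l x mu = splice k l x' mu"
  by (auto simp: splice_def fun_eq_iff)

lemma Wkl_outside:
  "(\<And>n. n \<le> k \<or> l \<le> n \<Longrightarrow> x n = x' n) \<Longrightarrow> Wkl L k l x = Wkl L k l x'"
  using splice_outside[of k l x x'] by (simp add: Wkl_def)

lemma splice_shift: "splice k l (shift_pow m x) mu = shift_pow m (splice (k+m) (l+m) x mu)"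
  by (auto simp: splice_def fun_eq_iff shift_pow_app algebra_simps)

definition win :: "int \<Rightarrow> int \<Rightarrow> (int \<Rightarrow> 'a) \<Rightarrow> 'a list" where
  "win k l x = map (\<lambda>i. x (k + 1 + int i)) [0..<nat (l-k-1)]"

lemma splice_win: "splice k l x (win k l x) = x"
  by (auto simp: splice_def win_def fun_eq_iff)

lemma length_win[simp]: "length (win k l x) = nat (l-k-1)" by (simp add: win_def)

lemma splice_val: "k < n \<Longrightarrow> n < l \<Longrightarrow> splice k l x mu n = mu ! nat (n-k-1)"
  by (simp add: splice_def)
lemma splice_val_out: "n \<le> k \<or> l \<le> n \<Longrightarrow> splice k l x mu n = x n"
  by (auto simp: splice_def)

lemma splice_peel_left:
  assumes "k + 2 \<le> l" "length mu = nat (l-k-2)"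
  shows "splice (k+1) l x mu = splice k l x (x (k+1) # mu)"
proof (rule ext)
  fix n
  show "splice (k+1) l x mu n = splice k l x (x (k+1) # mu) n"
  proof (cases "k + 1 < n \<and> n < l")
    case True
    then have "nat (n-k-1) = Suc (nat (n-(k+1)-1))" by auto
    then show ?thesis using True by (simp add: splice_def)
  next
    case False
    then show ?thesis by (cases "n = k+1") (auto simp: splice_def)
  qed
qed

lemma splice_peel_right:
  assumes "k + 2 \<le> l" "length mu = nat (l-k-2)"
  shows "splice k (l-1) x mu = splice k l x (mu @ [x (l-1)])"
proof (rule ext)
  fix n
  show "splice k (l-1) x mu n = splice k l x (mu @ [x (l-1)]) n"
  proof (cases "k < n \<and> n < l - 1")
    case True
    then have "nat (n-k-1) < length mu" using assms by auto
    then show ?thesis using True by (simp add: splice_def nth_append)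
  next
    case False
    show ?thesis
    proof (cases "n = l - 1")
      case True
      then have "nat (n-k-1) = length mu" using assms by auto
      then show ?thesis using True assms by (simp add: splice_def nth_append)
    next
      case False
      then show ?thesis using \<open>\<not> (k < n \<and> n < l - 1)\<close> by (auto simp: splice_def nth_append)
    qed
  qed
qed

lemma Wkl_peel_left:
  assumes "k + 2 \<le> l"
  shows "Wkl L (k+1) l x = {mu. x (k+1) # mu \<in> Wkl L k l x}"
proof -
  have "\<And>mu. (length mu = nat (l-(k+1)-1)) = (Suc (length mu) = nat (l-k-1))" using assms by auto
  moreover have "\<And>mu. length mu = nat (l-k-2) \<Longrightarrow> splice (k+1) l x mu = splice k l x (x (k+1) # mu)"
    using splice_peel_left[OF assms] by blast
  ultimately show ?thesis unfolding Wkl_def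
    by (auto simp: algebra_simps)
qed

lemma Wkl_peel_right:
  assumes "k + 2 \<le> l"
  shows "Wkl L k (l-1) x = {mu. mu @ [x (l-1)] \<in> Wkl L k l x}"
proof -
  have "\<And>mu. (length mu = nat (l-1-k-1)) = (Suc (length mu) = nat (l-k-1))" using assms by auto
  moreover have "\<And>mu. length mu = nat (l-k-2) \<Longrightarrow> splice k (l-1) x mu = splice k l x (mu @ [x (l-1)])"
    using splice_peel_right[OF assms] by blast
  ultimately show ?thesis unfolding Wkl_def
    by (auto simp: algebra_simps)
qed

definition inW :: "(int \<Rightarrow> 'a) set \<Rightarrow> nat \<Rightarrow> 'a list \<Rightarrow> (int \<Rightarrow> 'a) set \<Rightarrow> bool" where
  "inW L l mu u \<longleftrightarrow> (\<exists>x\<in>L. u = cls L (-1) (int l) x \<and> mu \<in> Wkl L (-1) (int l) x)"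

lemma splice_inside: "k < n \<Longrightarrow> n < l \<Longrightarrow> splice k l x mu n = splice k l x' mu n"
  by (simp add: splice_def)

lemma bij_by_keys:
  assumes "inj_on f A" "inj_on g B" "f ` A = g ` B"
  shows "\<exists>\<phi>. bij_betw \<phi> A B \<and> (\<forall>p\<in>A. g (\<phi> p) = f p)"
proof -
  have b1: "bij_betw f A (g ` B)" using assms by (simp add: bij_betw_def)
  have b2: "bij_betw (the_inv_into B g) (g ` B) B" using assms(2) by (rule bij_betw_the_inv_into[OF inj_on_imp_bij_betw])
  have "bij_betw (the_inv_into B g \<circ> f) A B" using b1 b2 by (rule bij_betw_trans)
  moreover have "\<forall>p\<in>A. g ((the_inv_into B g \<circ> f) p) = f p"
    using assms(3) f_the_inv_into_f[OF assms(2)] by (metis comp_apply image_eqI)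
  ultimately show ?thesis by blast
qed

lemma map_upt0_Suc: "map h [0..<Suc n] = h 0 # map (\<lambda>i. h (Suc i)) [0..<n]"
  by (induction n) auto

lemma trip: "e = (esrc e, elab e, etgt e)" by (simp add: esrc_def elab_def etgt_def)

locale ss =
  fixes L :: "(int \<Rightarrow> 'a::finite) set"
  assumes sub: "subshift L"
begin

abbreviation C :: "nat \<Rightarrow> (int \<Rightarrow> 'a) \<Rightarrow> (int \<Rightarrow> 'a) set" where
  "C l x \<equiv> cls L (-1) (int l) x"
abbreviation Wd :: "nat \<Rightarrow> (int \<Rightarrow> 'a) \<Rightarrow> 'a list set" where
  "Wd l x \<equiv> Wkl L (-1) (int l) x"

lemma L_ne: "L \<noteq> {}" using sub by (simp add: subshift_def)
lemma L_closed: "shift_closed L" using sub by (simp add: subshift_def)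

lemma sp1: "x \<in> L \<Longrightarrow> shift_pow 1 x \<in> L"
  using sub by (auto simp: subshift_def shift_eq[symmetric])

lemma spm1: "x \<in> L \<Longrightarrow> shift_pow (-1) x \<in> L"
proof -
  assume "x \<in> L"
  then obtain y where "y \<in> L" "x = shift y" using sub by (auto simp: subshift_def)
  then show ?thesis by (simp add: shift_eq)
qed

lemma sp_in: "x \<in> L \<Longrightarrow> shift_pow k x \<in> L"
proof (induction k rule: int_induct[where k=0])
  case base then show ?case by simp
next
  case (step1 i)
  then have "shift_pow 1 (shift_pow i x) \<in> L" using sp1 by blast
  then show ?case by (simp add: add.commute)
next
  case (step2 i)
  then have "shift_pow (-1) (shift_pow i x) \<in> L" using spm1 by blast
  then show ?case by simp
qed

lemma sp_in_iff: "shift_pow k x \<in> L \<longleftrightarrow> x \<in> L"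
  using sp_in[of x k] sp_in[of "shift_pow k x" "-k"] by auto

lemma Wkl_shift: "Wkl L k l (shift_pow m x) = Wkl L (k+m) (l+m) x"
proof -
  have "l + m - (k + m) - 1 = l - k - 1" by simp
  then show ?thesis unfolding Wkl_def splice_shift sp_in_iff by simp
qed

lemma win_in: "x \<in> L \<Longrightarrow> win k l x \<in> Wkl L k l x"
  by (simp add: Wkl_def splice_win)

lemma splice_in: "mu \<in> Wkl L k l x \<Longrightarrow> splice k l x mu \<in> L"
  by (simp add: Wkl_def)

lemma Wkl_splice: "Wkl L k l (splice k l x mu) = Wkl L k l x"
  by (rule Wkl_outside) (auto simp: splice_def)

lemma cls_eq_iff: "x \<in> L \<Longrightarrow> y \<in> L \<Longrightarrow> cls L k l x = cls L k l y \<longleftrightarrow> Wkl L k l x = Wkl L k l y"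
  by (auto simp: cls_def)

lemma cls_mem: "x \<in> L \<Longrightarrow> x \<in> cls L k l x" by (simp add: cls_def)

lemma finite_Omega: "finite (Omega L k l)"
proof -
  have sub: "Omega L k l \<subseteq> (\<lambda>W. {z\<in>L. Wkl L k l z = W}) ` Pow {mu. set mu \<subseteq> UNIV \<and> length mu = nat (l-k-1)}"
  proof
    fix c assume "c \<in> Omega L k l"
    then obtain x where x: "x \<in> L" "c = cls L k l x" by (auto simp: Omega_def)
    have "Wkl L k l x \<in> Pow {mu. set mu \<subseteq> UNIV \<and> length mu = nat (l-k-1)}"
      by (auto simp: Wkl_def)
    moreover have "c = (\<lambda>W. {z\<in>L. Wkl L k l z = W}) (Wkl L k l x)" using x by (simp add: cls_def)
    ultimately show "c \<in> (\<lambda>W. {z\<in>L. Wkl L k l z = W}) ` Pow {mu. set mu \<subseteq> UNIV \<and> length mu = nat (l-k-1)}"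
      by blast
  qed
  moreover have "finite {mu::'a list. set mu \<subseteq> UNIV \<and> length mu = nat (l-k-1)}"
    by (rule finite_lists_length_eq) simp
  then have "finite (Pow {mu::'a list. set mu \<subseteq> UNIV \<and> length mu = nat (l-k-1)})" by simp
  from finite_subset[OF sub finite_imageI[OF this]] show ?thesis .
qed

lemma theta_cls: "y \<in> L \<Longrightarrow> theta L l (cls L (- int l) 1 y) = C l (shift_pow (1 - int l) y)"
proof -
  assume y: "y \<in> L"
  define r where "r = (SOME x. x \<in> cls L (- int l) 1 y)"
  have "r \<in> cls L (- int l) 1 y" unfolding r_def by (rule someI[of "\<lambda>x. x \<in> cls L (- int l) 1 y", OF cls_mem[OF y]])
  then have r: "r \<in> L" "Wkl L (- int l) 1 r = Wkl L (- int l) 1 y" by (auto simp: cls_def)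
  have "Wd l (shift_pow (1 - int l) r) = Wd l (shift_pow (1 - int l) y)"
    using r by (simp add: Wkl_shift)
  moreover have "shift_pow (1 - int l) r \<in> L" "shift_pow (1 - int l) y \<in> L"
    using r y by (simp_all add: sp_in)
  ultimately have "C l (shift_pow (1 - int l) r) = C l (shift_pow (1 - int l) y)"
    by (simp add: cls_eq_iff)
  then show ?thesis unfolding theta_def r_def[symmetric] .
qed

lemma canEp_iff: "e \<in> canEp L l \<longleftrightarrow> (\<exists>y\<in>L. e = (C l y, y (int l), C (Suc l) y))"
  by (auto simp: canEp_def canV_def Omega_def)

lemma canEm_iff: "e \<in> canEm L k \<longleftrightarrow> (\<exists>z\<in>L. e = (C (Suc k) z, z 0, C k (shift_pow 1 z)))"
proof
  assume "e \<in> canEm L k"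
  then obtain y where y: "y \<in> L" "e = (theta L (Suc k) (cls L (- int (Suc k)) 1 y), y (- int k),
      theta L k (cls L (- int k) 1 y))"
    by (auto simp: canEm_def)
  define z where "z = shift_pow (- int k) y"
  have zL: "z \<in> L" using y sp_in z_def by blast
  have "theta L (Suc k) (cls L (- int (Suc k)) 1 y) = C (Suc k) (shift_pow (1 - int (Suc k)) y)"
    "theta L k (cls L (- int k) 1 y) = C k (shift_pow (1 - int k) y)"
    by (rule theta_cls[OF y(1)])+
  moreover have "y (- int k) = z 0" by (simp add: z_def shift_pow_app)
  ultimately have "e = (C (Suc k) z, z 0, C k (shift_pow 1 z))"
    using y by (simp add: z_def algebra_simps)
  with zL show "\<exists>z\<in>L. e = (C (Suc k) z, z 0, C k (shift_pow 1 z))" by blast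
next
  assume "\<exists>z\<in>L. e = (C (Suc k) z, z 0, C k (shift_pow 1 z))"
  then obtain z where z: "z \<in> L" "e = (C (Suc k) z, z 0, C k (shift_pow 1 z))" by blast
  define y where "y = shift_pow (int k) z"
  have y: "y \<in> L" using z sp_in y_def by blast
  have t: "theta L (Suc k) (cls L (- int (Suc k)) 1 y) = C (Suc k) (shift_pow (1 - int (Suc k)) y)"
    "theta L k (cls L (- int k) 1 y) = C k (shift_pow (1 - int k) y)"
    by (rule theta_cls[OF y])+
  have "y (- int k) = z 0" by (simp add: y_def shift_pow_app)
  then have "e = (theta L (Suc k) (cls L (- int (Suc k)) 1 y), y (- int k),
      theta L k (cls L (- int k) 1 y))"
    using z y t by (simp add: y_def algebra_simps)
  moreover have "theta L (Suc k) (cls L (- int (Suc k)) 1 y) \<in> canV L (Suc k)"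
    "theta L k (cls L (- int k) 1 y) \<in> canV L k"
    unfolding t using y sp_in by (auto simp: canV_def Omega_def)
  ultimately show "e \<in> canEm L k" using y unfolding canEm_def by blast
qed


lemma inW_iff: "x \<in> L \<Longrightarrow> inW L l mu (C l x) \<longleftrightarrow> mu \<in> Wd l x"
  unfolding inW_def using cls_eq_iff by blast

lemma inW_length: "inW L l mu u \<Longrightarrow> length mu = l"
  by (auto simp: inW_def Wkl_def)

lemma Wd0: "x \<in> L \<Longrightarrow> Wd 0 x = {[]}"
proof -
  assume x: "x \<in> L"
  have "splice (-1) 0 x [] = x" by (rule ext) (auto simp: splice_def)
  then show ?thesis using x by (auto simp: Wkl_def)
qed

lemma C0: "x \<in> L \<Longrightarrow> C 0 x = L"
  using Wd0 by (auto simp: cls_def)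

lemma canV_iff: "u \<in> canV L l \<longleftrightarrow> (\<exists>x\<in>L. u = C l x)"
  by (auto simp: canV_def Omega_def)

lemma canV0: "canV L 0 = {L}"
  using L_ne C0 by (auto simp: canV_iff)

lemma inW0: "u \<in> canV L 0 \<Longrightarrow> inW L 0 [] u"
proof -
  assume "u \<in> canV L 0"
  then obtain x where "x \<in> L" "u = C 0 x" by (auto simp: canV_iff)
  then show ?thesis using Wd0 inW_iff by blast
qed

lemma inW_ex: "u \<in> canV L l \<Longrightarrow> \<exists>mu. inW L l mu u"
  using win_in inW_iff by (fastforce simp: canV_iff)

lemma peelR: "Wd l y = {mu. mu @ [y (int l)] \<in> Wd (Suc l) y}"
  using Wkl_peel_right[of "-1" "int l + 1" L y] by (simp add: add.commute)

lemma peelL: "Wd k (shift_pow 1 z) = {mu. z 0 # mu \<in> Wd (Suc k) z}"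
  using Wkl_peel_left[of "-1" "int k + 1" L z] by (simp add: Wkl_shift add.commute)

lemma Ep_step: "(u', a, u) \<in> canEp L l \<Longrightarrow> inW L l mu u' \<Longrightarrow> inW L (Suc l) (mu @ [a]) u"
proof -
  assume e: "(u', a, u) \<in> canEp L l" and w: "inW L l mu u'"
  then obtain y where y: "y \<in> L" "u' = C l y" "a = y (int l)" "u = C (Suc l) y"
    by (auto simp: canEp_iff)
  then have "mu \<in> Wd l y" using w inW_iff by blast
  then have "mu @ [a] \<in> Wd (Suc l) y" using peelR y by blast
  then show ?thesis using y inW_iff by blast
qed

lemma Ep_back: "inW L (Suc l) (mu @ [a]) u \<Longrightarrow> \<exists>u'. (u', a, u) \<in> canEp L l \<and> inW L l mu u'"
proof -
  assume w: "inW L (Suc l) (mu @ [a]) u"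
  then obtain x where x: "x \<in> L" "u = C (Suc l) x" "mu @ [a] \<in> Wd (Suc l) x"
    by (auto simp: inW_def)
  have len: "length mu = l" using inW_length[OF w] by simp
  define y where "y = splice (-1) (int (Suc l)) x (mu @ [a])"
  have yL: "y \<in> L" using splice_in x y_def by blast
  have "Wd (Suc l) y = Wd (Suc l) x" using Wkl_splice y_def by blast
  then have u: "u = C (Suc l) y" using x yL cls_eq_iff by blast
  have ya: "y (int l) = a" using len by (simp add: y_def splice_def nth_append)
  have "mu \<in> Wd l y" using peelR[of l y] ya \<open>Wd (Suc l) y = Wd (Suc l) x\<close> x by simp
  then have "inW L l mu (C l y)" using yL inW_iff by blast
  moreover have "(C l y, a, u) \<in> canEp L l" using yL u ya by (auto simp: canEp_iff)
  ultimately show ?thesis by blast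
qed

lemma Em_step: "(w, b, u) \<in> canEm L k \<Longrightarrow> inW L k mu u \<Longrightarrow> inW L (Suc k) (b # mu) w"
proof -
  assume e: "(w, b, u) \<in> canEm L k" and i: "inW L k mu u"
  then obtain z where z: "z \<in> L" "w = C (Suc k) z" "b = z 0" "u = C k (shift_pow 1 z)"
    by (auto simp: canEm_iff)
  then have "mu \<in> Wd k (shift_pow 1 z)" using i inW_iff sp_in by blast
  then have "b # mu \<in> Wd (Suc k) z" using peelL z by blast
  then show ?thesis using z inW_iff by blast
qed

lemma Em_back: "inW L (Suc k) (b # mu) w \<Longrightarrow> \<exists>u. (w, b, u) \<in> canEm L k \<and> inW L k mu u"
proof -
  assume i: "inW L (Suc k) (b # mu) w"
  then obtain x where x: "x \<in> L" "w = C (Suc k) x" "b # mu \<in> Wd (Suc k) x"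
    by (auto simp: inW_def)
  define z where "z = splice (-1) (int (Suc k)) x (b # mu)"
  have zL: "z \<in> L" using splice_in x z_def by blast
  have eq: "Wd (Suc k) z = Wd (Suc k) x" using Wkl_splice z_def by blast
  then have w: "w = C (Suc k) z" using x zL cls_eq_iff by blast
  have zb: "z 0 = b" by (simp add: z_def splice_def)
  have "mu \<in> Wd k (shift_pow 1 z)" using peelL[of k z] zb eq x by simp
  then have "inW L k mu (C k (shift_pow 1 z))" using zL sp_in inW_iff by blast
  moreover have "(w, b, C k (shift_pow 1 z)) \<in> canEm L k" using zL w zb by (auto simp: canEm_iff)
  ultimately show ?thesis by blast
qed


lemma Em_res: "e \<in> canEm L l \<Longrightarrow> e' \<in> canEm L l \<Longrightarrow> esrc e = esrc e' \<Longrightarrow> elab e = elab e' \<Longrightarrow> e = e'"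
proof -
  assume "e \<in> canEm L l" "e' \<in> canEm L l" and h: "esrc e = esrc e'" "elab e = elab e'"
  then obtain z z' where z: "z \<in> L" "e = (C (Suc l) z, z 0, C l (shift_pow 1 z))"
    and z': "z' \<in> L" "e' = (C (Suc l) z', z' 0, C l (shift_pow 1 z'))"
    by (auto simp: canEm_iff)
  then have "Wd (Suc l) z = Wd (Suc l) z'" "z 0 = z' 0" using h cls_eq_iff by (auto simp: esrc_def elab_def)
  then have "Wd l (shift_pow 1 z) = Wd l (shift_pow 1 z')" by (simp add: peelL)
  then have "C l (shift_pow 1 z) = C l (shift_pow 1 z')" using z z' sp_in cls_eq_iff by blast
  then show ?thesis using z z' h by (simp add: esrc_def elab_def)
qed

lemma Ep_res: "e \<in> canEp L l \<Longrightarrow> e' \<in> canEp L l \<Longrightarrow> etgt e = etgt e' \<Longrightarrow> elab e = elab e' \<Longrightarrow> e = e'"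
proof -
  assume "e \<in> canEp L l" "e' \<in> canEp L l" and h: "etgt e = etgt e'" "elab e = elab e'"
  then obtain y y' where y: "y \<in> L" "e = (C l y, y (int l), C (Suc l) y)"
    and y': "y' \<in> L" "e' = (C l y', y' (int l), C (Suc l) y')"
    by (auto simp: canEp_iff)
  then have "Wd (Suc l) y = Wd (Suc l) y'" "y (int l) = y' (int l)" using h cls_eq_iff by (auto simp: etgt_def elab_def)
  then have "Wd l y = Wd l y'" by (simp add: peelR[of l y] peelR[of l y'])
  then have "C l y = C l y'" using y y' cls_eq_iff by blast
  then show ?thesis using y y' h by (simp add: etgt_def elab_def)
qed

lemma ex_Em_tgt: "v \<in> canV L l \<Longrightarrow> \<exists>e\<in>canEm L l. etgt e = v"
proof -
  assume "v \<in> canV L l"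
  then obtain x where x: "x \<in> L" "v = C l x" by (auto simp: canV_iff)
  define z where "z = shift_pow (-1) x"
  have "z \<in> L" using x sp_in z_def by blast
  then have "(C (Suc l) z, z 0, C l (shift_pow 1 z)) \<in> canEm L l" by (auto simp: canEm_iff)
  moreover have "shift_pow 1 z = x" by (simp add: z_def)
  ultimately show ?thesis using x by (force simp: etgt_def)
qed

lemma ex_Em_src: "v \<in> canV L l \<Longrightarrow> 1 \<le> l \<Longrightarrow> \<exists>e\<in>canEm L (l - 1). esrc e = v"
proof -
  assume "v \<in> canV L l" "1 \<le> l"
  then obtain x where x: "x \<in> L" "v = C l x" by (auto simp: canV_iff)
  have "Suc (l - 1) = l" using \<open>1 \<le> l\<close> by simp
  then have "(C l x, x 0, C (l - 1) (shift_pow 1 x)) \<in> canEm L (l - 1)"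
    using x canEm_iff[of _ "l - 1"] by metis
  then show ?thesis using x by (force simp: esrc_def)
qed

lemma ex_Ep_src: "v \<in> canV L l \<Longrightarrow> \<exists>e\<in>canEp L l. esrc e = v"
proof -
  assume "v \<in> canV L l"
  then obtain x where x: "x \<in> L" "v = C l x" by (auto simp: canV_iff)
  then have "(C l x, x (int l), C (Suc l) x) \<in> canEp L l" by (auto simp: canEp_iff)
  then show ?thesis using x by (force simp: esrc_def)
qed

lemma ex_Ep_tgt: "v \<in> canV L l \<Longrightarrow> 1 \<le> l \<Longrightarrow> \<exists>e\<in>canEp L (l - 1). etgt e = v"
proof -
  assume "v \<in> canV L l" "1 \<le> l"
  then obtain x where x: "x \<in> L" "v = C l x" by (auto simp: canV_iff)
  have "Suc (l - 1) = l" using \<open>1 \<le> l\<close> by simp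
  then have "(C (l - 1) x, x (int (l - 1)), C l x) \<in> canEp L (l - 1)"
    using x canEp_iff[of _ "l - 1"] by metis
  then show ?thesis using x by (force simp: etgt_def)
qed

lemma loc_LR:
  assumes "em \<in> canEm L l" "ep \<in> canEp L (Suc l)" "esrc em = esrc ep"
  shows "\<exists>fp fm. fp \<in> canEp L l \<and> fm \<in> canEm L (Suc l) \<and> esrc fp = etgt em \<and> etgt fp = etgt fm
     \<and> esrc fm = etgt ep \<and> elab fm = elab em \<and> elab fp = elab ep"
proof -
  obtain z where z: "z \<in> L" "em = (C (Suc l) z, z 0, C l (shift_pow 1 z))"
    using assms(1) by (auto simp: canEm_iff)
  obtain y where y: "y \<in> L" "ep = (C (Suc l) y, y (int (Suc l)), C (Suc (Suc l)) y)"
    using assms(2) by (auto simp: canEp_iff)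
  have Wzy: "Wd (Suc l) z = Wd (Suc l) y" using z y assms(3) cls_eq_iff by (auto simp: esrc_def)
  define mu where "mu = win (-1) (int (Suc l)) z"
  have "mu \<in> Wd (Suc l) z" unfolding mu_def by (rule win_in[OF z(1)])
  with Wzy have mu: "mu \<in> Wd (Suc l) y" by simp
  define y2 where "y2 = splice (-1) (int (Suc l)) y mu"
  have y2L: "y2 \<in> L" using splice_in mu y2_def by blast
  have in_eq: "\<And>n. -1 < n \<Longrightarrow> n < int (Suc l) \<Longrightarrow> y2 n = z n"
    using splice_inside[of "-1" _ "int (Suc l)" y mu z] splice_win[of "-1" "int (Suc l)" z]
    unfolding y2_def mu_def by metis
  have out_eq: "\<And>n. n \<le> -1 \<or> int (Suc l) \<le> n \<Longrightarrow> y2 n = y n"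
    unfolding y2_def by (simp add: splice_val_out)
  have W1: "Wd (Suc l) y2 = Wd (Suc l) y" unfolding y2_def by (rule Wkl_splice)
  have W2: "Wd (Suc (Suc l)) y2 = Wd (Suc (Suc l)) y" by (rule Wkl_outside) (auto intro: out_eq)
  have y20: "y2 0 = z 0" by (rule in_eq) auto
  have y2l: "y2 (int (Suc l)) = y (int (Suc l))" by (rule out_eq) auto
  have W3: "Wd l (shift_pow 1 y2) = Wd l (shift_pow 1 z)"
    unfolding peelL[of l y2] peelL[of l z] y20 W1 Wzy ..
  define fm where "fm = (C (Suc (Suc l)) y2, y2 0, C (Suc l) (shift_pow 1 y2))"
  define fp where "fp = (C l (shift_pow 1 y2), (shift_pow 1 y2) (int l), C (Suc l) (shift_pow 1 y2))"
  have "fm \<in> canEm L (Suc l)" unfolding fm_def using y2L by (auto simp: canEm_iff)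
  moreover have "fp \<in> canEp L l" unfolding fp_def using y2L sp_in by (auto simp: canEp_iff)
  moreover have "esrc fp = etgt em" unfolding fp_def using z W3 y2L sp_in cls_eq_iff
    by (simp add: esrc_def etgt_def)
  moreover have "esrc fm = etgt ep" unfolding fm_def using y W2 y2L cls_eq_iff
    by (simp add: esrc_def etgt_def)
  moreover have "elab fp = elab ep" unfolding fp_def using y y2l
    by (simp add: elab_def shift_pow_app add.commute)
  moreover have "elab fm = elab em" "etgt fp = etgt fm" unfolding fp_def fm_def using z y20
    by (simp_all add: elab_def etgt_def)
  ultimately show ?thesis by blast
qed

lemma loc_RL:
  assumes "fp \<in> canEp L l" "fm \<in> canEm L (Suc l)" "etgt fp = etgt fm"
  shows "\<exists>em ep. em \<in> canEm L l \<and> ep \<in> canEp L (Suc l) \<and> etgt em = esrc fp \<and> esrc em = esrc ep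
     \<and> etgt ep = esrc fm \<and> elab em = elab fm \<and> elab ep = elab fp"
proof -
  obtain y' where y': "y' \<in> L" "fp = (C l y', y' (int l), C (Suc l) y')"
    using assms(1) by (auto simp: canEp_iff)
  obtain z' where z': "z' \<in> L" "fm = (C (Suc (Suc l)) z', z' 0, C (Suc l) (shift_pow 1 z'))"
    using assms(2) by (auto simp: canEm_iff)
  have Weq: "Wd (Suc l) y' = Wd (Suc l) (shift_pow 1 z')"
    using z' y' assms(3) cls_eq_iff sp_in by (auto simp: etgt_def)
  define mu where "mu = win (-1) (int (Suc l)) y'"
  have "mu \<in> Wd (Suc l) y'" unfolding mu_def by (rule win_in[OF y'(1)])
  with Weq have mu: "mu \<in> Wd (Suc l) (shift_pow 1 z')" by simp
  define t where "t = splice (-1) (int (Suc l)) (shift_pow 1 z') mu"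
  have tL: "t \<in> L" using splice_in mu t_def by blast
  have in_eq: "\<And>n. -1 < n \<Longrightarrow> n < int (Suc l) \<Longrightarrow> t n = y' n"
    using splice_inside[of "-1" _ "int (Suc l)" "shift_pow 1 z'" mu y'] splice_win[of "-1" "int (Suc l)" y']
    unfolding t_def mu_def by metis
  have out_eq: "\<And>n. n \<le> -1 \<or> int (Suc l) \<le> n \<Longrightarrow> t n = z' (n + 1)"
    unfolding t_def by (simp add: splice_val_out shift_pow_app)
  define y where "y = shift_pow (-1) t"
  have yL: "y \<in> L" using tL sp_in y_def by blast
  have sy: "shift_pow 1 y = t" by (simp add: y_def)
  have y0: "y 0 = z' 0" using out_eq[of "-1"] by (simp add: y_def shift_pow_app)
  have tl: "t (int l) = y' (int l)" by (rule in_eq) auto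
  have yl: "y (int (Suc l)) = t (int l)" by (simp add: y_def shift_pow_app)
  have W1: "Wd (Suc l) t = Wd (Suc l) y'" unfolding t_def using Wkl_splice Weq by metis
  have W3: "Wd l t = Wd l y'" using peelR[of l t] peelR[of l y'] W1 tl by simp
  have W2: "Wd (Suc (Suc l)) y = Wd (Suc (Suc l)) z'"
  proof (rule Wkl_outside)
    fix n :: int assume "n \<le> -1 \<or> int (Suc (Suc l)) \<le> n"
    then have "n - 1 \<le> -1 \<or> int (Suc l) \<le> n - 1" by auto
    then show "y n = z' n" using out_eq[of "n - 1"] by (simp add: y_def shift_pow_app)
  qed
  define em where "em = (C (Suc l) y, y 0, C l (shift_pow 1 y))"
  define ep where "ep = (C (Suc l) y, y (int (Suc l)), C (Suc (Suc l)) y)"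
  have "em \<in> canEm L l" unfolding em_def using yL by (auto simp: canEm_iff)
  moreover have "ep \<in> canEp L (Suc l)" unfolding ep_def using yL by (auto simp: canEp_iff)
  moreover have "etgt em = esrc fp" unfolding em_def using y' W3 tL sy cls_eq_iff
    by (simp add: esrc_def etgt_def)
  moreover have "etgt ep = esrc fm" unfolding ep_def using z' W2 yL cls_eq_iff
    by (simp add: esrc_def etgt_def)
  moreover have "elab ep = elab fp" unfolding ep_def using y' yl tl
    by (simp add: elab_def)
  moreover have "elab em = elab fm" "esrc em = esrc ep" unfolding em_def ep_def using z' y0
    by (simp_all add: elab_def esrc_def)
  ultimately show ?thesis by blast
qed


lemma local_prop:
  "\<exists>\<phi>. bij_betw \<phi>
     {(em, ep). em \<in> canEm L l \<and> ep \<in> canEp L (Suc l) \<and> etgt em = u \<and> esrc em = esrc ep \<and> etgt ep = v}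
     {(fp, fm). fp \<in> canEp L l \<and> fm \<in> canEm L (Suc l) \<and> esrc fp = u \<and> etgt fp = etgt fm \<and> esrc fm = v}
   \<and> (\<forall>p \<in> {(em, ep). em \<in> canEm L l \<and> ep \<in> canEp L (Suc l) \<and> etgt em = u \<and> esrc em = esrc ep \<and> etgt ep = v}.
        elab (fst p) = elab (snd (\<phi> p)) \<and> elab (snd p) = elab (fst (\<phi> p)))"
  (is "\<exists>\<phi>. bij_betw \<phi> ?A ?B \<and> _")
proof -
  define f where "f = (\<lambda>p::((int \<Rightarrow> 'a) set \<times> 'a \<times> (int \<Rightarrow> 'a) set) \<times> ((int \<Rightarrow> 'a) set \<times> 'a \<times> (int \<Rightarrow> 'a) set). (elab (fst p), elab (snd p)))"
  define g where "g = (\<lambda>q::((int \<Rightarrow> 'a) set \<times> 'a \<times> (int \<Rightarrow> 'a) set) \<times> ((int \<Rightarrow> 'a) set \<times> 'a \<times> (int \<Rightarrow> 'a) set). (elab (snd q), elab (fst q)))"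
  have "inj_on f ?A"
  proof (rule inj_onI)
    fix p p' assume "p \<in> ?A" "p' \<in> ?A" "f p = f p'"
    then obtain em ep em' ep' where p: "p = (em, ep)" "p' = (em', ep')"
      and h: "em \<in> canEm L l" "ep \<in> canEp L (Suc l)" "etgt em = u" "esrc em = esrc ep" "etgt ep = v"
        "em' \<in> canEm L l" "ep' \<in> canEp L (Suc l)" "etgt em' = u" "esrc em' = esrc ep'" "etgt ep' = v"
        "elab em = elab em'" "elab ep = elab ep'"
      by (auto simp: f_def)
    then have "ep = ep'" using Ep_res[OF h(2) h(7)] by simp
    then have "em = em'" using h Em_res[OF h(1) h(6)] by simp
    then show "p = p'" using p \<open>ep = ep'\<close> by simp
  qed
  moreover have "inj_on g ?B"
  proof (rule inj_onI)
    fix p p' assume "p \<in> ?B" "p' \<in> ?B" "g p = g p'"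
    then obtain fp fm fp' fm' where p: "p = (fp, fm)" "p' = (fp', fm')"
      and h: "fp \<in> canEp L l" "fm \<in> canEm L (Suc l)" "esrc fp = u" "etgt fp = etgt fm" "esrc fm = v"
        "fp' \<in> canEp L l" "fm' \<in> canEm L (Suc l)" "esrc fp' = u" "etgt fp' = etgt fm'" "esrc fm' = v"
        "elab fm = elab fm'" "elab fp = elab fp'"
      by (auto simp: g_def)
    then have "fm = fm'" using Em_res[OF h(2) h(7)] by simp
    then have "fp = fp'" using h Ep_res[OF h(1) h(6)] by simp
    then show "p = p'" using p \<open>fm = fm'\<close> by simp
  qed
  moreover have "f ` ?A = g ` ?B"
  proof
    show "f ` ?A \<subseteq> g ` ?B"
    proof
      fix k assume "k \<in> f ` ?A"
      then obtain em ep where h: "em \<in> canEm L l" "ep \<in> canEp L (Suc l)" "etgt em = u" "esrc em = esrc ep"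
        "etgt ep = v" "k = (elab em, elab ep)" by (auto simp: f_def)
      then obtain fp fm where "fp \<in> canEp L l \<and> fm \<in> canEm L (Suc l) \<and> esrc fp = etgt em \<and> etgt fp = etgt fm
         \<and> esrc fm = etgt ep \<and> elab fm = elab em \<and> elab fp = elab ep" using loc_LR by blast
      then have "(fp, fm) \<in> ?B" "g (fp, fm) = k" using h by (auto simp: g_def)
      then show "k \<in> g ` ?B" by force
    qed
  next
    show "g ` ?B \<subseteq> f ` ?A"
    proof
      fix k assume "k \<in> g ` ?B"
      then obtain fp fm where h: "fp \<in> canEp L l" "fm \<in> canEm L (Suc l)" "esrc fp = u" "etgt fp = etgt fm"
        "esrc fm = v" "k = (elab fm, elab fp)" by (auto simp: g_def)
      then obtain em ep where "em \<in> canEm L l \<and> ep \<in> canEp L (Suc l) \<and> etgt em = esrc fp \<and> esrc em = esrc ep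
         \<and> etgt ep = esrc fm \<and> elab em = elab fm \<and> elab ep = elab fp" using loc_RL by blast
      then have "(em, ep) \<in> ?A" "f (em, ep) = k" using h by (auto simp: f_def)
      then show "k \<in> f ` ?A" by force
    qed
  qed
  ultimately have "\<exists>\<phi>. bij_betw \<phi> ?A ?B \<and> (\<forall>p\<in>?A. g (\<phi> p) = f p)"
    by (rule bij_by_keys)
  then obtain \<phi> where phi: "bij_betw \<phi> ?A ?B" "\<forall>p\<in>?A. g (\<phi> p) = f p"
    by blast
  have "\<forall>p\<in>?A. elab (fst p) = elab (snd (\<phi> p)) \<and> elab (snd p) = elab (fst (\<phi> p))"
  proof
    fix p assume "p \<in> ?A"
    then have "g (\<phi> p) = f p" using phi(2) by blast
    then show "elab (fst p) = elab (snd (\<phi> p)) \<and> elab (snd p) = elab (fst (\<phi> p))"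
      unfolding f_def g_def by simp
  qed
  with phi(1) show ?thesis by blast
qed


lemma Ep_src: "e \<in> canEp L l \<Longrightarrow> esrc e \<in> canV L l"
  by (auto simp: canEp_def esrc_def)
lemma Em_tgt: "e \<in> canEm L l \<Longrightarrow> etgt e \<in> canV L l"
  by (auto simp: canEm_def etgt_def)

lemma Ep_step': "e \<in> canEp L l \<Longrightarrow> inW L l mu (esrc e) \<Longrightarrow> inW L (Suc l) (mu @ [elab e]) (etgt e)"
  using Ep_step[of "esrc e" "elab e" "etgt e" l mu] trip[of e] by simp
lemma Em_step': "e \<in> canEm L k \<Longrightarrow> inW L k mu (etgt e) \<Longrightarrow> inW L (Suc k) (elab e # mu) (esrc e)"
  using Em_step[of "esrc e" "elab e" "etgt e" k mu] trip[of e] by simp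

lemma P1: "1 \<le> l \<Longrightarrow> (\<forall>k\<in>{1..l}. e k \<in> canEp L (k - 1)) \<Longrightarrow> (\<forall>k\<in>{1..<l}. etgt (e k) = esrc (e (Suc k)))
  \<Longrightarrow> inW L l (map (\<lambda>k. elab (e k)) [1..<Suc l]) (etgt (e l))"
proof (induction l)
  case 0 then show ?case by simp
next
  case (Suc l)
  have e: "e (Suc l) \<in> canEp L l" using Suc.prems(2) bspec[OF Suc.prems(2), of "Suc l"] by simp
  show ?case
  proof (cases "l = 0")
    case True
    then have "inW L l [] (esrc (e (Suc l)))" using inW0 Ep_src e by simp
    from Ep_step'[OF e this] show ?thesis using True by simp
  next
    case False
    then have "inW L l (map (\<lambda>k. elab (e k)) [1..<Suc l]) (etgt (e l))"
      using Suc by auto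
    moreover have "etgt (e l) = esrc (e (Suc l))" using Suc.prems(3) False by auto
    ultimately show ?thesis using Ep_step'[OF e] by simp
  qed
qed

lemma P2: "inW L l mu u \<Longrightarrow> \<exists>e. (\<forall>k\<in>{1..l}. e k \<in> canEp L (k - 1)) \<and> etgt (e l) = u \<and>
   (\<forall>k\<in>{1..<l}. etgt (e k) = esrc (e (Suc k))) \<and> map (\<lambda>k. elab (e k)) [1..<Suc l] = mu"
proof (induction l arbitrary: mu u)
  case 0
  then have "mu = []" using inW_length[OF 0] by simp
  then show ?case by (intro exI[of _ "\<lambda>_. (u, undefined, u)"]) (simp add: etgt_def)
next
  case (Suc l)
  then have "length mu = Suc l" using inW_length by simp
  then obtain mu' a where mu: "mu = mu' @ [a]"
    by (metis append_butlast_last_id length_0_conv nat.distinct(1))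
  obtain u' where u': "(u', a, u) \<in> canEp L l" "inW L l mu' u'" using Ep_back Suc.prems mu by blast
  obtain e' where e': "\<forall>k\<in>{1..l}. e' k \<in> canEp L (k - 1)" "etgt (e' l) = u'"
    "\<forall>k\<in>{1..<l}. etgt (e' k) = esrc (e' (Suc k))" "map (\<lambda>k. elab (e' k)) [1..<Suc l] = mu'"
    using Suc.IH[OF u'(2)] by blast
  define e where "e = e'(Suc l := (u', a, u))"
  have "\<forall>k\<in>{1..Suc l}. e k \<in> canEp L (k - 1)" using e' u' by (auto simp: e_def le_Suc_eq)
  moreover have "etgt (e (Suc l)) = u" by (simp add: e_def etgt_def)
  moreover have "\<forall>k\<in>{1..<Suc l}. etgt (e k) = esrc (e (Suc k))"
  proof
    fix k assume k: "k \<in> {1..<Suc l}"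
    show "etgt (e k) = esrc (e (Suc k))"
    proof (cases "k = l")
      case True then show ?thesis using e' by (simp add: e_def esrc_def)
    next
      case False then show ?thesis using e' k by (auto simp: e_def)
    qed
  qed
  moreover have "map (\<lambda>k. elab (e k)) [1..<Suc (Suc l)] = mu"
  proof -
    have "map (\<lambda>k. elab (e k)) [1..<Suc l] = mu'" using e'(4) by (auto simp: e_def)
    then show ?thesis by (simp add: mu e_def elab_def)
  qed
  ultimately show ?case by blast
qed

lemma F1: "1 \<le> l \<Longrightarrow> (\<forall>k\<in>{1..l}. f k \<in> canEm L (k - 1)) \<Longrightarrow> (\<forall>k\<in>{2..l}. etgt (f k) = esrc (f (k - 1)))
  \<Longrightarrow> inW L l (map (\<lambda>k. elab (f k)) (rev [1..<Suc l])) (esrc (f l))"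
proof (induction l)
  case 0 then show ?case by simp
next
  case (Suc l)
  have f: "f (Suc l) \<in> canEm L l" using bspec[OF Suc.prems(2), of "Suc l"] by simp
  show ?case
  proof (cases "l = 0")
    case True
    then have "inW L l [] (etgt (f (Suc l)))" using inW0 Em_tgt f by simp
    from Em_step'[OF f this] show ?thesis using True by simp
  next
    case False
    then have "inW L l (map (\<lambda>k. elab (f k)) (rev [1..<Suc l])) (esrc (f l))"
      using Suc by auto
    moreover have "etgt (f (Suc l)) = esrc (f l)" using Suc.prems(3) False by auto
    ultimately show ?thesis using Em_step'[OF f] by simp
  qed
qed

lemma F2: "inW L l mu u \<Longrightarrow> \<exists>f. (\<forall>k\<in>{1..l}. f k \<in> canEm L (k - 1)) \<and> esrc (f l) = u \<and>
   (\<forall>k\<in>{2..l}. etgt (f k) = esrc (f (k - 1))) \<and> map (\<lambda>k. elab (f k)) (rev [1..<Suc l]) = mu"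
proof (induction l arbitrary: mu u)
  case 0
  then have "mu = []" using inW_length[OF 0] by simp
  then show ?case by (intro exI[of _ "\<lambda>_. (u, undefined, u)"]) (simp add: esrc_def)
next
  case (Suc l)
  then have "length mu = Suc l" using inW_length by simp
  then obtain mu' b where mu: "mu = b # mu'"
    by (metis length_Suc_conv)
  obtain u' where u': "(u, b, u') \<in> canEm L l" "inW L l mu' u'" using Em_back Suc.prems mu by blast
  obtain f' where f': "\<forall>k\<in>{1..l}. f' k \<in> canEm L (k - 1)" "esrc (f' l) = u'"
    "\<forall>k\<in>{2..l}. etgt (f' k) = esrc (f' (k - 1))" "map (\<lambda>k. elab (f' k)) (rev [1..<Suc l]) = mu'"
    using Suc.IH[OF u'(2)] by blast
  define f where "f = f'(Suc l := (u, b, u'))"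
  have "\<forall>k\<in>{1..Suc l}. f k \<in> canEm L (k - 1)" using f' u' by (auto simp: f_def le_Suc_eq)
  moreover have "esrc (f (Suc l)) = u" by (simp add: f_def esrc_def)
  moreover have "\<forall>k\<in>{2..Suc l}. etgt (f k) = esrc (f (k - 1))"
  proof
    fix k assume k: "k \<in> {2..Suc l}"
    show "etgt (f k) = esrc (f (k - 1))"
    proof (cases "k = Suc l")
      case True then show ?thesis using f' by (simp add: f_def etgt_def)
    next
      case False then show ?thesis using f' k by (auto simp: f_def)
    qed
  qed
  moreover have "map (\<lambda>k. elab (f k)) (rev [1..<Suc (Suc l)]) = mu"
  proof -
    have "map (\<lambda>k. elab (f k)) (rev [1..<Suc l]) = mu'" using f'(4) by (auto simp: f_def)
    then show ?thesis by (simp add: mu f_def elab_def)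
  qed
  ultimately show ?case by blast
qed


lemma inW_adm: "inW L l (a @ w @ b) u \<Longrightarrow> w \<noteq> [] \<Longrightarrow> w \<in> admissible_words L"
proof -
  assume i: "inW L l (a @ w @ b) u" and w: "w \<noteq> []"
  then obtain x where x: "x \<in> L" "a @ w @ b \<in> Wd l x" by (auto simp: inW_def)
  have len: "length (a @ w @ b) = l" using inW_length[OF i] .
  define y where "y = splice (-1) (int l) x (a @ w @ b)"
  have yL: "y \<in> L" using splice_in x y_def by blast
  have "\<forall>i<length w. y (int (length a) + int i) = w ! i"
  proof (intro allI impI)
    fix i assume "i < length w"
    then have "-1 < int (length a) + int i" "int (length a) + int i < int l" using len by auto
    then have "y (int (length a) + int i) = (a @ w @ b) ! nat (int (length a) + int i - -1 - 1)"
      unfolding y_def by (rule splice_val)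
    also have "\<dots> = (a @ w @ b) ! (length a + i)" by (simp add: nat_add_distrib)
    also have "\<dots> = w ! i" using \<open>i < length w\<close> by (simp add: nth_append)
    finally show "y (int (length a) + int i) = w ! i" .
  qed
  then show ?thesis using yL w unfolding admissible_words_def by blast
qed

lemma Wp1: "1 \<le> n \<Longrightarrow> (\<forall>i<n. e i \<in> canEp L (m + i)) \<Longrightarrow> (\<forall>i. Suc i < n \<longrightarrow> etgt (e i) = esrc (e (Suc i)))
  \<Longrightarrow> inW L m mu0 (esrc (e 0)) \<Longrightarrow> inW L (m + n) (mu0 @ map (\<lambda>i. elab (e i)) [0..<n]) (etgt (e (n - 1)))"
proof (induction n)
  case 0 then show ?case by simp
next
  case (Suc n)
  show ?case
  proof (cases "n = 0")
    case True
    have "e 0 \<in> canEp L m" using Suc.prems(2) True by auto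
    from Ep_step'[OF this Suc.prems(4)] show ?thesis using True by simp
  next
    case False
    then have "inW L (m + n) (mu0 @ map (\<lambda>i. elab (e i)) [0..<n]) (etgt (e (n - 1)))"
      using Suc by auto
    moreover have "etgt (e (n - 1)) = esrc (e n)"
    proof -
      obtain p where p: "n = Suc p" using False not0_implies_Suc by blast
      have "etgt (e p) = esrc (e (Suc p))" using Suc.prems(3) p by simp
      then show ?thesis using p by simp
    qed
    moreover have en: "e n \<in> canEp L (m + n)" using Suc.prems(2) by auto
    ultimately have "inW L (Suc (m + n)) ((mu0 @ map (\<lambda>i. elab (e i)) [0..<n]) @ [elab (e n)]) (etgt (e n))"
      using Ep_step'[OF en] by metis
    then show ?thesis by simp
  qed
qed

lemma Wplus_eq: "Wplus (canEp L) esrc etgt elab = admissible_words L"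
proof
  show "Wplus (canEp L) esrc etgt elab \<subseteq> admissible_words L"
  proof
    fix w assume "w \<in> Wplus (canEp L) esrc etgt elab"
    then obtain e n m where h: "w = map (\<lambda>i. elab (e i)) [0..<n]" "1 \<le> n"
      "\<forall>i<n. e i \<in> canEp L (m + i)" "\<forall>i. Suc i < n \<longrightarrow> etgt (e i) = esrc (e (Suc i))"
      by (auto simp: Wplus_def)
    have "e 0 \<in> canEp L m" using h by auto
    then obtain mu0 where "inW L m mu0 (esrc (e 0))" using inW_ex Ep_src by blast
    from Wp1[OF h(2) h(3) h(4) this] have "inW L (m + n) (mu0 @ w @ []) (etgt (e (n - 1)))"
      using h(1) by simp
    moreover have "w \<noteq> []" using h by auto
    ultimately show "w \<in> admissible_words L" by (rule inW_adm)
  qed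
next
  show "admissible_words L \<subseteq> Wplus (canEp L) esrc etgt elab"
  proof
    fix w assume "w \<in> admissible_words L"
    then obtain x n0 where x: "w \<noteq> []" "x \<in> L" "\<forall>i<length w. x (n0 + int i) = w ! i"
      by (auto simp: admissible_words_def)
    define x' where "x' = shift_pow n0 x"
    have x'L: "x' \<in> L" using x sp_in x'_def by blast
    have x'w: "\<forall>i<length w. x' (int i) = w ! i" using x by (simp add: x'_def shift_pow_app add.commute)
    define e where "e = (\<lambda>i. (C i x', x' (int i), C (Suc i) x'))"
    have "w = map (\<lambda>i. elab (e i)) [0..<length w]"
    proof (rule nth_equalityI)
      show "length w = length (map (\<lambda>i. elab (e i)) [0..<length w])" by simp
      fix i assume "i < length w"
      then show "w ! i = map (\<lambda>i. elab (e i)) [0..<length w] ! i"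
        using x'w by (simp add: e_def elab_def)
    qed
    moreover have "\<forall>i<length w. e i \<in> canEp L (0 + i)" using x'L unfolding e_def canEp_iff by auto
    moreover have "\<forall>i. Suc i < length w \<longrightarrow> etgt (e i) = esrc (e (Suc i))" by (simp add: e_def esrc_def etgt_def)
    moreover have "1 \<le> length w" using x by (simp add: Suc_leI)
    ultimately have "w = map (\<lambda>i. elab (e i)) [0..<length w] \<and> 1 \<le> length w \<and>
        (\<forall>i<length w. e i \<in> canEp L (0 + i)) \<and> (\<forall>i. Suc i < length w \<longrightarrow> etgt (e i) = esrc (e (Suc i)))"
      by blast
    then show "w \<in> Wplus (canEp L) esrc etgt elab" unfolding Wplus_def
      by (intro CollectI exI[of _ e] exI[of _ "length w"] exI[of _ "0::nat"])
  qed
qed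

lemma Wm1: "1 \<le> n \<Longrightarrow> (\<forall>i<n. f i \<in> canEm L (m + n - 1 - i)) \<Longrightarrow> (\<forall>i. Suc i < n \<longrightarrow> etgt (f i) = esrc (f (Suc i)))
  \<Longrightarrow> inW L m mu0 (etgt (f (n - 1))) \<Longrightarrow> inW L (m + n) (map (\<lambda>i. elab (f i)) [0..<n] @ mu0) (esrc (f 0))"
proof (induction n arbitrary: f)
  case 0 then show ?case by simp
next
  case (Suc n)
  show ?case
  proof (cases "n = 0")
    case True
    have "f 0 \<in> canEm L m" using Suc.prems(2) True by auto
    from Em_step'[OF this] Suc.prems(4) show ?thesis using True by simp
  next
    case False
    define g where "g = (\<lambda>i. f (Suc i))"
    have "\<forall>i<n. g i \<in> canEm L (m + n - 1 - i)"
    proof (intro allI impI)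
      fix i assume "i < n"
      then have "f (Suc i) \<in> canEm L (m + Suc n - 1 - Suc i)" using Suc.prems(2) by blast
      moreover have "m + Suc n - 1 - Suc i = m + n - 1 - i" by simp
      ultimately show "g i \<in> canEm L (m + n - 1 - i)" by (simp add: g_def)
    qed
    moreover have "\<forall>i. Suc i < n \<longrightarrow> etgt (g i) = esrc (g (Suc i))" using Suc.prems(3) by (simp add: g_def)
    moreover have "inW L m mu0 (etgt (g (n - 1)))" using Suc.prems(4) False by (simp add: g_def)
    ultimately have "inW L (m + n) (map (\<lambda>i. elab (g i)) [0..<n] @ mu0) (esrc (g 0))"
      using Suc.IH False by auto
    moreover have "etgt (f 0) = esrc (g 0)" using Suc.prems(3) False by (simp add: g_def)
    moreover have "f 0 \<in> canEm L (m + n)" using Suc.prems(2)[rule_format, of 0] by simp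
    ultimately have "inW L (Suc (m + n)) (elab (f 0) # map (\<lambda>i. elab (g i)) [0..<n] @ mu0) (esrc (f 0))"
      using Em_step' by fastforce
    then show ?thesis by (simp only: map_upt0_Suc g_def add_Suc_right append_Cons)
  qed
qed

lemma Wminus_eq: "Wminus (canEm L) esrc etgt elab = admissible_words L"
proof
  show "Wminus (canEm L) esrc etgt elab \<subseteq> admissible_words L"
  proof
    fix w assume "w \<in> Wminus (canEm L) esrc etgt elab"
    then obtain f n m where h: "w = map (\<lambda>i. elab (f i)) [0..<n]" "1 \<le> n"
      "\<forall>i<n. f i \<in> canEm L (m + n - 1 - i)" "\<forall>i. Suc i < n \<longrightarrow> etgt (f i) = esrc (f (Suc i))"
      by (auto simp: Wminus_def)
    have "n - 1 < n" using h(2) by simp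
    then have "f (n - 1) \<in> canEm L (m + n - 1 - (n - 1))" using h(3) by blast
    moreover have "m + n - 1 - (n - 1) = m" using h by simp
    ultimately obtain mu0 where "inW L m mu0 (etgt (f (n - 1)))" using inW_ex Em_tgt by metis
    from Wm1[OF h(2) h(3) h(4) this] have "inW L (m + n) ([] @ w @ mu0) (esrc (f 0))"
      using h(1) by simp
    moreover have "w \<noteq> []" using h by auto
    ultimately show "w \<in> admissible_words L" by (rule inW_adm)
  qed
next
  show "admissible_words L \<subseteq> Wminus (canEm L) esrc etgt elab"
  proof
    fix w assume "w \<in> admissible_words L"
    then obtain x n0 where x: "w \<noteq> []" "x \<in> L" "\<forall>i<length w. x (n0 + int i) = w ! i"
      by (auto simp: admissible_words_def)
    define x' where "x' = shift_pow n0 x"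
    have x'L: "x' \<in> L" using x sp_in x'_def by blast
    have x'w: "\<forall>i<length w. x' (int i) = w ! i" using x by (simp add: x'_def shift_pow_app add.commute)
    define n where "n = length w"
    define f where "f = (\<lambda>i. (C (Suc (n - 1 - i)) (shift_pow (int i) x'), shift_pow (int i) x' 0,
        C (n - 1 - i) (shift_pow 1 (shift_pow (int i) x'))))"
    have "w = map (\<lambda>i. elab (f i)) [0..<n]"
    proof (rule nth_equalityI)
      show "length w = length (map (\<lambda>i. elab (f i)) [0..<n])" by (simp add: n_def)
      fix i assume "i < length w"
      then show "w ! i = map (\<lambda>i. elab (f i)) [0..<n] ! i"
        using x'w by (simp add: f_def elab_def n_def shift_pow_app)
    qed
    moreover have "\<forall>i<n. f i \<in> canEm L (0 + n - 1 - i)"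
    proof (intro allI impI)
      fix i assume "i < n"
      have "shift_pow (int i) x' \<in> L" using x'L sp_in by blast
      then have "f i \<in> canEm L (n - 1 - i)" unfolding f_def canEm_iff by blast
      then show "f i \<in> canEm L (0 + n - 1 - i)" by simp
    qed
    moreover have "\<forall>i. Suc i < n \<longrightarrow> etgt (f i) = esrc (f (Suc i))"
    proof (intro allI impI)
      fix i assume "Suc i < n"
      then have eq1: "n - 1 - i = Suc (n - 1 - Suc i)" by simp
      have sh: "shift_pow 1 (shift_pow (int i) x') = shift_pow (int (Suc i)) x'" by (simp add: add.commute)
      show "etgt (f i) = esrc (f (Suc i))" unfolding f_def etgt_def esrc_def
        by (simp only: snd_conv fst_conv eq1 sh)
    qed
    moreover have "1 \<le> n" using x by (simp add: Suc_leI n_def)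
    ultimately have "w = map (\<lambda>i. elab (f i)) [0..<n] \<and> 1 \<le> n \<and>
        (\<forall>i<n. f i \<in> canEm L (0 + n - 1 - i)) \<and> (\<forall>i. Suc i < n \<longrightarrow> etgt (f i) = esrc (f (Suc i)))"
      by blast
    then show "w \<in> Wminus (canEm L) esrc etgt elab" unfolding Wminus_def
      by (intro CollectI exI[of _ f] exI[of _ n] exI[of _ "0::nat"])
  qed
qed


lemma Pwords_eq: "1 \<le> l \<Longrightarrow> Pwords (canEp L) esrc etgt elab l u = {mu. inW L l mu u}"
proof
  assume l: "1 \<le> l"
  show "Pwords (canEp L) esrc etgt elab l u \<subseteq> {mu. inW L l mu u}"
  proof
    fix mu assume "mu \<in> Pwords (canEp L) esrc etgt elab l u"
    then obtain e where h: "mu = map (\<lambda>k. elab (e k)) [1..<Suc l]" "\<forall>k\<in>{1..l}. e k \<in> canEp L (k - 1)"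
      "etgt (e l) = u" "\<forall>k\<in>{1..<l}. etgt (e k) = esrc (e (Suc k))"
      unfolding Pwords_def by blast
    show "mu \<in> {mu. inW L l mu u}" using P1[OF l h(2) h(4)] h(1) h(3) by simp
  qed
next
  show "{mu. inW L l mu u} \<subseteq> Pwords (canEp L) esrc etgt elab l u"
  proof
    fix mu assume "mu \<in> {mu. inW L l mu u}"
    then obtain e where h: "(\<forall>k\<in>{1..l}. e k \<in> canEp L (k - 1)) \<and> etgt (e l) = u \<and>
      (\<forall>k\<in>{1..<l}. etgt (e k) = esrc (e (Suc k))) \<and> map (\<lambda>k. elab (e k)) [1..<Suc l] = mu"
      using P2 by blast
    then show "mu \<in> Pwords (canEp L) esrc etgt elab l u" unfolding Pwords_def by blast
  qed
qed

lemma Fwords_eq: "1 \<le> l \<Longrightarrow> Fwords (canEm L) esrc etgt elab l u = {mu. inW L l mu u}"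
proof
  assume l: "1 \<le> l"
  show "Fwords (canEm L) esrc etgt elab l u \<subseteq> {mu. inW L l mu u}"
  proof
    fix mu assume "mu \<in> Fwords (canEm L) esrc etgt elab l u"
    then obtain f where h: "mu = map (\<lambda>k. elab (f k)) (rev [1..<Suc l])" "\<forall>k\<in>{1..l}. f k \<in> canEm L (k - 1)"
      "esrc (f l) = u" "\<forall>k\<in>{2..l}. etgt (f k) = esrc (f (k - 1))"
      unfolding Fwords_def by blast
    show "mu \<in> {mu. inW L l mu u}" using F1[OF l h(2) h(4)] h(1) h(3) by simp
  qed
next
  show "{mu. inW L l mu u} \<subseteq> Fwords (canEm L) esrc etgt elab l u"
  proof
    fix mu assume "mu \<in> {mu. inW L l mu u}"
    then obtain f where h: "(\<forall>k\<in>{1..l}. f k \<in> canEm L (k - 1)) \<and> esrc (f l) = u \<and>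
      (\<forall>k\<in>{2..l}. etgt (f k) = esrc (f (k - 1))) \<and> map (\<lambda>k. elab (f k)) (rev [1..<Suc l]) = mu"
      using F2 by blast
    then show "mu \<in> Fwords (canEm L) esrc etgt elab l u" unfolding Fwords_def by blast
  qed
qed

end

lemma sub_le:
  fixes L1 L2 :: "(int \<Rightarrow> 'a::finite) set"
  assumes s1: "subshift L1" and s2: "subshift L2"
    and adm: "admissible_words L1 \<subseteq> admissible_words L2"
  shows "L1 \<subseteq> L2"
proof
  fix x assume x: "x \<in> L1"
  interpret s2: ss L2 by (rule ss.intro[OF s2])
  have "\<forall>N::nat. \<exists>y\<in>L2. \<forall>i. \<bar>i\<bar> \<le> int N \<longrightarrow> y i = x i"
  proof
    fix N :: nat
    define w where "w = map (\<lambda>i. x (int i - int N)) [0..<Suc (2 * N)]"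
    have "\<forall>i<length w. x (- int N + int i) = w ! i" by (simp add: w_def del: upt_Suc)
    moreover have "w \<noteq> []" by (simp add: w_def)
    ultimately have "w \<in> admissible_words L1" using x unfolding admissible_words_def by blast
    then have "w \<in> admissible_words L2" using adm by blast
    then obtain y n where y: "y \<in> L2" "\<forall>i<length w. y (n + int i) = w ! i"
      unfolding admissible_words_def by blast
    define y' where "y' = shift_pow (n + int N) y"
    have "y' \<in> L2" using y s2.sp_in y'_def by blast
    moreover have "\<forall>i. \<bar>i\<bar> \<le> int N \<longrightarrow> y' i = x i"
    proof (intro allI impI)
      fix i :: int assume i: "\<bar>i\<bar> \<le> int N"
      define j where "j = nat (i + int N)"
      have j: "int j = i + int N" "j < length w" using i by (auto simp: j_def w_def)
      have "y' i = y (n + int j)" using j by (simp add: y'_def shift_pow_app algebra_simps)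
      also have "\<dots> = w ! j" using y j by blast
      also have "\<dots> = x (int j - int N)" using j by (simp add: w_def del: upt_Suc)
      also have "\<dots> = x i" using j by simp
      finally show "y' i = x i" .
    qed
    ultimately show "\<exists>y\<in>L2. \<forall>i. \<bar>i\<bar> \<le> int N \<longrightarrow> y i = x i" by blast
  qed
  then show "x \<in> L2" using s2 unfolding subshift_def shift_closed_def by blast
qed

lemma presented_eq:
  fixes L :: "(int \<Rightarrow> 'a::finite) set"
  assumes "subshift L"
  shows "presented_subshift (admissible_words L) = L"
  unfolding presented_subshift_def
proof (rule the_equality)
  show "subshift L \<and> admissible_words L = admissible_words L" using assms by simp
next
  fix L' :: "(int \<Rightarrow> 'a) set" assume "subshift L' \<and> admissible_words L' = admissible_words L"
  then have "L' \<subseteq> L" "L \<subseteq> L'" using sub_le[of L' L] sub_le[of L L'] assms by auto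
  then show "L' = L" by (rule subset_antisym)
qed

theorem proposition5p4:
  fixes L :: "(int \<Rightarrow> 'a::finite) set"
  assumes "subshift L"
  shows "lambda_graph_bisystem (UNIV :: 'a set) (UNIV :: 'a set) (canV L)
           (canEm L) esrc etgt elab (canEp L) esrc etgt elab
       \<and> FPCC (UNIV :: 'a set) (UNIV :: 'a set) (canV L)
           (canEm L) esrc etgt elab (canEp L) esrc etgt elab
       \<and> Wplus (canEp L) esrc etgt elab = Wminus (canEm L) esrc etgt elab
       \<and> presented_subshift (Wplus (canEp L) esrc etgt elab) = L"
proof -
  interpret ss L by (rule ss.intro[OF assms])
  have LG: "lambda_graph_bisystem (UNIV :: 'a set) (UNIV :: 'a set) (canV L)
           (canEm L) esrc etgt elab (canEp L) esrc etgt elab"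
    unfolding lambda_graph_bisystem_def
  proof (intro conjI)
    show "finite (UNIV :: 'a set)" by simp
    show "finite (UNIV :: 'a set)" by simp
    show "\<forall>l. finite (canV L l) \<and> canV L l \<noteq> {}"
      using finite_Omega L_ne by (auto simp: canV_def Omega_def)
    show "\<forall>l. \<forall>e\<in>canEm L l. esrc e \<in> canV L (Suc l) \<and> etgt e \<in> canV L l \<and> elab e \<in> UNIV"
      by (auto simp: canEm_def esrc_def etgt_def)
    show "\<forall>l. \<forall>e\<in>canEp L l. esrc e \<in> canV L l \<and> etgt e \<in> canV L (Suc l) \<and> elab e \<in> UNIV"
      by (auto simp: canEp_def esrc_def etgt_def)
    show "\<forall>l\<ge>1. \<forall>v\<in>canV L l. (\<exists>e\<in>canEm L l. etgt e = v) \<and> (\<exists>e\<in>canEm L (l - 1). esrc e = v) \<and>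
                       (\<exists>e\<in>canEp L l. esrc e = v) \<and> (\<exists>e\<in>canEp L (l - 1). etgt e = v)"
    proof (intro allI impI ballI conjI)
      fix l v assume l: "1 \<le> l" and v: "v \<in> canV L l"
      show "\<exists>e\<in>canEm L l. etgt e = v" using v by (rule ex_Em_tgt)
      show "\<exists>e\<in>canEm L (l - 1). esrc e = v" using v l by (rule ex_Em_src)
      show "\<exists>e\<in>canEp L l. esrc e = v" using v by (rule ex_Ep_src)
      show "\<exists>e\<in>canEp L (l - 1). etgt e = v" using v l by (rule ex_Ep_tgt)
    qed
    show "\<forall>v\<in>canV L 0. (\<exists>e\<in>canEm L 0. etgt e = v) \<and> (\<exists>e\<in>canEp L 0. esrc e = v)"
    proof (intro ballI conjI)
      fix v assume v: "v \<in> canV L 0"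
      show "\<exists>e\<in>canEm L 0. etgt e = v" using v by (rule ex_Em_tgt)
      show "\<exists>e\<in>canEp L 0. esrc e = v" using v by (rule ex_Ep_src)
    qed
    show "\<forall>l. \<forall>e\<in>canEm L l. \<forall>e'\<in>canEm L l. esrc e = esrc e' \<and> elab e = elab e' \<longrightarrow> e = e'"
    proof (intro allI ballI impI)
      fix l e e' assume "e \<in> canEm L l" "e' \<in> canEm L l" "esrc e = esrc e' \<and> elab e = elab e'"
      then show "e = e'" using Em_res by blast
    qed
    show "\<forall>l. \<forall>e\<in>canEp L l. \<forall>e'\<in>canEp L l. etgt e = etgt e' \<and> elab e = elab e' \<longrightarrow> e = e'"
    proof (intro allI ballI impI)
      fix l e e' assume "e \<in> canEp L l" "e' \<in> canEp L l" "etgt e = etgt e' \<and> elab e = elab e'"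
      then show "e = e'" using Ep_res by blast
    qed
    show "\<forall>l. \<forall>u\<in>canV L l. \<forall>v\<in>canV L (l + 2).
        \<exists>\<phi>. bij_betw \<phi>
              {(em, ep). em \<in> canEm L l \<and> ep \<in> canEp L (Suc l) \<and> etgt em = u \<and> esrc em = esrc ep \<and> etgt ep = v}
              {(fp, fm). fp \<in> canEp L l \<and> fm \<in> canEm L (Suc l) \<and> esrc fp = u \<and> etgt fp = etgt fm \<and> esrc fm = v}
            \<and> (\<forall>p \<in> {(em, ep). em \<in> canEm L l \<and> ep \<in> canEp L (Suc l) \<and> etgt em = u \<and> esrc em = esrc ep \<and> etgt ep = v}.
                 elab (fst p) = elab (snd (\<phi> p)) \<and> elab (snd p) = elab (fst (\<phi> p)))"
      by (intro allI ballI) (rule local_prop)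
  qed
  have FP: "FPCC (UNIV :: 'a set) (UNIV :: 'a set) (canV L)
           (canEm L) esrc etgt elab (canEp L) esrc etgt elab"
    unfolding FPCC_def
  proof (intro conjI allI impI ballI)
    show "card (canV L 0) = 1" using canV0 by simp
    show "(UNIV :: 'a set) = UNIV" ..
    fix l u assume "1 \<le> l" "u \<in> canV L l"
    then show "Fwords (canEm L) esrc etgt elab l u = Pwords (canEp L) esrc etgt elab l u"
      using Fwords_eq Pwords_eq by simp
  qed
  have W: "Wplus (canEp L) esrc etgt elab = Wminus (canEm L) esrc etgt elab"
    using Wplus_eq Wminus_eq by simp
  have P: "presented_subshift (Wplus (canEp L) esrc etgt elab) = L"
    using Wplus_eq presented_eq[OF assms] by simp
  show ?thesis using LG FP W P by blast
qed

end
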